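(* Let $\mathcal{P}=\{G^{\rm z},c^{\rm z},A^{\rm z},b^{\rm z}\}\subset\mathbb{R}^n$ be a nonempty constrained zonotope, and let $\mathcal{C}=\{G^{\rm c},c^{\rm c}\}=\{G^{\rm c}\xi+c^{\rm c}:\xi\in[-1,1]^n\}\subset\mathbb{R}^n$, with $G^{\rm c}\in\mathbb{R}^{n\times n}$ and $c^{\rm c}\in\mathbb{R}^n$, be a parallelotope with $\mathcal{P}\subseteq\mathcal{C}$. For each $i=1,\ldots,n$ solve the linear programs $$\zeta^{\rm L}_i=\min_{\xi^{\rm c},\xi^{\rm z}}\Big\{\xi^{\rm c}_i:\ G^{\rm c}_{i,:}\xi^{\rm c}+c^{\rm c}_i=G^{\rm z}_{i,:}\xi^{\rm z}+c^{\rm z}_i,\ \xi^{\rm c}\in[-1,1]^n,\ \xi^{\rm z}\in\mathcal{B}(A^{\rm z},b^{\rm z})\Big\},$$ $$\zeta^{\rm U}_i=\max_{\xi^{\rm c},\xi^{\rm z}}\Big\{\xi^{\rm c}_i:\ G^{\rm c}_{i,:}\xi^{\rm c}+c^{\rm c}_i=G^{\rm z}_{i,:}\xi^{\rm z}+c^{\rm z}_i,\ \xi^{\rm c}\in[-1,1]^n,\ \xi^{\rm z}\in\mathcal{B}(A^{\rm z},b^{\rm z})\Big\}.$$ Define $\mathrm{rad}=\tfrac12(\zeta^{\rm U}-\zeta^{\rm L})\in\mathbb{R}^n$, $\mathrm{mid}=\tfrac12(\zeta^{\rm L}+\zeta^{\rm U})\in\mathbb{R}^n$, and the zonotope $$\mathcal{T}=\{G^{\rm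 c}\,\mathrm{diag}(\mathrm{rad}),\ c^{\rm c}+G^{\rm c}\,\mathrm{mid}\}=\{G^{\rm c}\,\mathrm{diag}(\mathrm{rad})\xi+c^{\rm c}+G^{\rm c}\,\mathrm{mid}:\xi\in[-1,1]^n\}.$$ Then $\mathcal{T}$ is a parallelotope with $\mathcal{T}\supseteq\mathcal{P}$ (the paper calls $\mathcal{T}$ the optimal parallelotope obtained in this way).
   Context: A constrained zonotope (CZ) with generator matrix $G\in\mathbb{R}^{n\times n_g}$, center $c\in\mathbb{R}^n$, and constraints $A\in\mathbb{R}^{n_h\times n_g}$, $b\in\mathbb{R}^{n_h}$ is the set $\{G,c,A,b\}=\{G\xi+c:\xi\in\mathcal{B}(A,b)\}$, where $\mathcal{B}(A,b)=\{\xi\in[-1,1]^{n_g}:A\xi=b\}$. A zonotope $\{G,c\}$ is a CZ without equality constraints. $M_{i,:}$ denotes the $i$th row of a matrix $M$, and $\mathrm{diag}(v)$ the diagonal matrix with diagonal $v$. *)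

theory Defs
  imports "HOL-Analysis.Analysis"
begin

definition unit_box :: "(real ^ 'k) set" where
  "unit_box = {\<xi>. \<forall>j. \<bar>\<xi> $ j\<bar> \<le> 1}"

definition Bset :: "real ^ 'g ^ 'h \<Rightarrow> real ^ 'h \<Rightarrow> (real ^ 'g) set" where
  "Bset A b = {\<xi> \<in> unit_box. A *v \<xi> = b}"

definition CZ :: "real ^ 'g ^ 'n \<Rightarrow> real ^ 'n \<Rightarrow> real ^ 'g ^ 'h \<Rightarrow> real ^ 'h \<Rightarrow> (real ^ 'n) set" where
  "CZ G c A b = {G *v \<xi> + c | \<xi>. \<xi> \<in> Bset A b}"

definition zonotope :: "real ^ 'g ^ 'n \<Rightarrow> real ^ 'n \<Rightarrow> (real ^ 'n) set" where
  "zonotope G c = {G *v \<xi> + c | \<xi>. \<xi> \<in> unit_box}"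

definition parallelotope :: "(real ^ 'n) set \<Rightarrow> bool" where
  "parallelotope S \<longleftrightarrow> (\<exists>(G :: real ^ 'n ^ 'n) c. S = zonotope G c)"

definition diag_mat :: "real ^ 'n \<Rightarrow> real ^ 'n ^ 'n" where
  "diag_mat v = (\<chi> i j. if i = j then v $ i else 0)"

definition LP_values :: "real ^ 'n ^ 'n \<Rightarrow> real ^ 'n \<Rightarrow> real ^ 'g ^ 'n \<Rightarrow> real ^ 'n
    \<Rightarrow> real ^ 'g ^ 'h \<Rightarrow> real ^ 'h \<Rightarrow> 'n \<Rightarrow> real set" where
  "LP_values Gc cc Gz cz A b i =
     {\<xi>c $ i | \<xi>c \<xi>z. (Gc $ i) \<bullet> \<xi>c + cc $ i = (Gz $ i) \<bullet> \<xi>z + cz $ i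
                      \<and> \<xi>c \<in> unit_box \<and> \<xi>z \<in> Bset A b}"

definition zetaL where "zetaL Gc cc Gz cz A b = (\<chi> i. Inf (LP_values Gc cc Gz cz A b i))"
definition zetaU where "zetaU Gc cc Gz cz A b = (\<chi> i. Sup (LP_values Gc cc Gz cz A b i))"

end

theory Submission
  imports Defs
begin

lemma diag_mat_mult: "diag_mat r *v v = (\<chi> j. r $ j * v $ j)"
  unfolding diag_mat_def matrix_vector_mult_def
  by (simp add: vec_eq_iff if_distrib[where f="\<lambda>a. a * _"] cong: if_cong)

lemma mid_aux: "(a::real) \<le> x \<and> x \<le> b \<Longrightarrow> \<bar>x - (a+b)/2\<bar> \<le> (b-a)/2"
  apply (elim conjE)
  apply (subst abs_le_iff)
  apply (intro conjI)
  apply (simp add: field_simps)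
  apply (simp add: field_simps)
  done

theorem proposition3:
  fixes Gz :: "real ^ 'g ^ 'n" and cz :: "real ^ 'n"
    and Az :: "real ^ 'g ^ 'h" and bz :: "real ^ 'h"
    and Gc :: "real ^ 'n ^ 'n" and cc :: "real ^ 'n"
  assumes "CZ Gz cz Az bz \<noteq> {}"
    and "CZ Gz cz Az bz \<subseteq> zonotope Gc cc"
  defines "zL \<equiv> zetaL Gc cc Gz cz Az bz"
    and "zU \<equiv> zetaU Gc cc Gz cz Az bz"
  defines "rad \<equiv> (1/2) *\<^sub>R (zU - zL)"
    and "mid \<equiv> (1/2) *\<^sub>R (zL + zU)"
  defines "T \<equiv> zonotope (Gc ** diag_mat rad) (cc + Gc *v mid)"
  shows "parallelotope T \<and> CZ Gz cz Az bz \<subseteq> T"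
proof
  show "parallelotope T" unfolding T_def parallelotope_def by blast
next
  show "CZ Gz cz Az bz \<subseteq> T"
  proof
    fix x assume xP: "x \<in> CZ Gz cz Az bz"
    then obtain \<xi>z where xz: "x = Gz *v \<xi>z + cz" and \<xi>zB: "\<xi>z \<in> Bset Az bz"
      unfolding CZ_def by blast
    from xP assms(2) obtain \<xi>c where xc: "x = Gc *v \<xi>c + cc" and \<xi>cB: "\<xi>c \<in> unit_box"
      unfolding zonotope_def by blast
    have bnd: "\<forall>i. zL $ i \<le> \<xi>c $ i \<and> \<xi>c $ i \<le> zU $ i"
    proof
      fix i
      have eq: "(Gc $ i) \<bullet> \<xi>c + cc $ i = (Gz $ i) \<bullet> \<xi>z + cz $ i"
        using arg_cong[where f="\<lambda>v. v $ i", OF trans[OF xc[symmetric] xz]]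
        by (simp add: matrix_vector_mult_def inner_vec_def mult.commute)
      have mem: "\<xi>c $ i \<in> LP_values Gc cc Gz cz Az bz i"
        unfolding LP_values_def using eq \<xi>cB \<xi>zB by blast
      have sub: "LP_values Gc cc Gz cz Az bz i \<subseteq> {-1..1}"
        unfolding LP_values_def unit_box_def by (auto simp: abs_le_iff)
      have bb: "bdd_below (LP_values Gc cc Gz cz Az bz i)"
        using sub by (meson bdd_below_Icc bdd_below_mono)
      have ba: "bdd_above (LP_values Gc cc Gz cz Az bz i)"
        using sub by (meson bdd_above_Icc bdd_above_mono)
      show "zL $ i \<le> \<xi>c $ i \<and> \<xi>c $ i \<le> zU $ i"
        unfolding zL_def zU_def zetaL_def zetaU_def
        using cInf_lower[OF mem bb] cSup_upper[OF mem ba] by simp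
    qed
    define \<eta> where "\<eta> = (\<chi> j. if rad $ j = 0 then 0 else (\<xi>c $ j - mid $ j) / rad $ j)"
    have comp: "rad $ j * \<eta> $ j + mid $ j = \<xi>c $ j" for j
    proof (cases "rad $ j = 0")
      case True
      then show ?thesis using bnd[rule_format, of j]
        unfolding \<eta>_def rad_def mid_def by auto
    next
      case False
      then show ?thesis unfolding \<eta>_def by simp
    qed
    have \<eta>B: "\<eta> \<in> unit_box"
      unfolding unit_box_def
    proof (intro CollectI allI)
      fix j
      show "\<bar>\<eta> $ j\<bar> \<le> 1"
      proof (cases "rad $ j = 0")
        case True then show ?thesis unfolding \<eta>_def by simp
      next
        case False
        have rp: "rad $ j > 0" using False bnd[rule_format, of j] unfolding rad_def by auto
        have r: "rad $ j = (zU $ j - zL $ j) / 2" and m: "mid $ j = (zL $ j + zU $ j) / 2"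
          unfolding rad_def mid_def by auto
        have "\<bar>\<xi>c $ j - mid $ j\<bar> \<le> rad $ j"
          unfolding r m by (rule mid_aux[OF bnd[rule_format, of j]])
        then have "\<bar>\<xi>c $ j - mid $ j\<bar> / rad $ j \<le> 1" using rp by simp
        moreover have "\<eta> $ j = (\<xi>c $ j - mid $ j) / rad $ j" unfolding \<eta>_def using False by simp
        ultimately show ?thesis using rp by (simp only: abs_divide abs_of_pos)
      qed
    qed
    have "diag_mat rad *v \<eta> + mid = \<xi>c"
      by (simp add: diag_mat_mult vec_eq_iff comp)
    have "(Gc ** diag_mat rad) *v \<eta> + (cc + Gc *v mid) = x"
    proof -
      have "(Gc ** diag_mat rad) *v \<eta> + (cc + Gc *v mid) = Gc *v (diag_mat rad *v \<eta>) + Gc *v mid + cc"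
        by (simp only: matrix_vector_mul_assoc[symmetric] add.assoc add.commute[of cc])
      also have "\<dots> = Gc *v (diag_mat rad *v \<eta> + mid) + cc"
        by (simp add: matrix_vector_right_distrib)
      also have "\<dots> = x" using xc \<open>diag_mat rad *v \<eta> + mid = \<xi>c\<close> by simp
      finally show ?thesis .
    qed
    then show "x \<in> T" unfolding T_def zonotope_def using \<eta>B by blast
  qed
qed

end
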